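(* Let $G=(V,E)$ be a finite simple connected graph, $b\in\mathbb{R}^V$ a nontrivial vector, and $S\subset V$ a $b$-boundable subset. Let $x_S$ be the local solution of $\mathcal{L}x=b$ satisfying the boundary condition $b$. Then $$x_S=\int_0^\infty \mathcal{H}_{S,t}\,b_1\,\mathrm{d}t,\qquad b_1=D_S^{-1/2}A_{S,\delta S}D_{\delta S}^{-1/2}b_{\delta S}.$$
   Context: $d_v$ is the degree of $v$, $D$ the diagonal degree matrix, $A$ the adjacency matrix, $\mathcal{L}=D^{-1/2}(D-A)D^{-1/2}$. For $S\subseteq V$, $M_S$ is the principal submatrix indexed by $S$; $\delta(S)=\{u\in V\setminus S: u\sim v\text{ for some }v\in S\}$; $A_{S,\delta S}$ is the submatrix of $A$ with rows $S$ and columns $\delta(S)$; $D_{\delta S}$, $b_{\delta S}$ are restrictions to $\delta(S)$. $S$ is $b$-boundable if (i) $S\subseteq V\setminus\mathrm{supp}(b)$, (ii) $\delta(S)\cap\mathrm{supp}(b)\neq\emptyset$, (iii) the induced subgraph on $S$ is connected and $\delta(S)\neq\emptyset$. The solution of $\mathcal{L}x=b$ satisfying the boundary condition $b$ is $x\in\mathbb{R}^V$ with $x(v)=\sum_{u\sim v}x(u)/\sqrt{d_vd_u}$ for $v\in S$ and $x(v)=b(v)$ for $v\notin S$; the local solution $x_S$ is its restriction to $S$. The Dirichlet heat kernel is $\mathcal{H}_{S,t}=e^{-t\mathcal{L}_S}$. *)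

theory Defs
  imports "HOL-Analysis.Analysis"
begin

definition simple_graph :: "'a set \<Rightarrow> ('a \<Rightarrow> 'a \<Rightarrow> bool) \<Rightarrow> bool" where
  "simple_graph V E \<longleftrightarrow> finite V \<and> (\<forall>u v. E u v \<longrightarrow> u \<in> V \<and> v \<in> V)
     \<and> (\<forall>u v. E u v \<longrightarrow> E v u) \<and> (\<forall>v. \<not> E v v)"

definition connected_on :: "('a \<Rightarrow> 'a \<Rightarrow> bool) \<Rightarrow> 'a set \<Rightarrow> bool" where
  "connected_on E S \<longleftrightarrow> S \<noteq> {} \<and>
     (\<forall>u\<in>S. \<forall>v\<in>S. (\<lambda>x y. x \<in> S \<and> y \<in> S \<and> E x y)\<^sup>*\<^sup>* u v)"

definition degree :: "'a set \<Rightarrow> ('a \<Rightarrow> 'a \<Rightarrow> bool) \<Rightarrow> 'a \<Rightarrow> nat" where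
  "degree V E v = card {u\<in>V. E v u}"

definition adj :: "('a \<Rightarrow> 'a \<Rightarrow> bool) \<Rightarrow> 'a \<Rightarrow> 'a \<Rightarrow> real" where
  "adj E u v = (if E u v then 1 else 0)"

definition norm_laplacian :: "'a set \<Rightarrow> ('a \<Rightarrow> 'a \<Rightarrow> bool) \<Rightarrow> 'a \<Rightarrow> 'a \<Rightarrow> real" where
  "norm_laplacian V E u v =
     inverse (sqrt (real (degree V E u))) *
     ((if u = v then real (degree V E u) else 0) - adj E u v) *
     inverse (sqrt (real (degree V E v)))"

definition vboundary :: "'a set \<Rightarrow> ('a \<Rightarrow> 'a \<Rightarrow> bool) \<Rightarrow> 'a set \<Rightarrow> 'a set" where
  "vboundary V E S = {u \<in> V - S. \<exists>v\<in>S. E u v}"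

definition supp :: "'a set \<Rightarrow> ('a \<Rightarrow> real) \<Rightarrow> 'a set" where
  "supp V b = {v\<in>V. b v \<noteq> 0}"

definition boundable :: "'a set \<Rightarrow> ('a \<Rightarrow> 'a \<Rightarrow> bool) \<Rightarrow> ('a \<Rightarrow> real) \<Rightarrow> 'a set \<Rightarrow> bool" where
  "boundable V E b S \<longleftrightarrow> S \<subseteq> V - supp V b
     \<and> vboundary V E S \<inter> supp V b \<noteq> {}
     \<and> connected_on E S \<and> vboundary V E S \<noteq> {}"

definition matmul :: "'a set \<Rightarrow> ('a \<Rightarrow> 'a \<Rightarrow> real) \<Rightarrow> ('a \<Rightarrow> 'a \<Rightarrow> real) \<Rightarrow> 'a \<Rightarrow> 'a \<Rightarrow> real" where
  "matmul S M N u v = (\<Sum>w\<in>S. M u w * N w v)"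

fun matpow :: "'a set \<Rightarrow> ('a \<Rightarrow> 'a \<Rightarrow> real) \<Rightarrow> nat \<Rightarrow> 'a \<Rightarrow> 'a \<Rightarrow> real" where
  "matpow S M 0 = (\<lambda>u v. if u = v then 1 else 0)"
| "matpow S M (Suc k) = matmul S M (matpow S M k)"

definition matexp :: "'a set \<Rightarrow> real \<Rightarrow> ('a \<Rightarrow> 'a \<Rightarrow> real) \<Rightarrow> 'a \<Rightarrow> 'a \<Rightarrow> real" where
  "matexp S c M u v = (\<Sum>k. c ^ k / fact k * matpow S M k u v)"

text \<open>Dirichlet heat kernel H_{S,t} = exp(-t L_S), L_S the principal submatrix on S.\<close>
definition dirichlet_heat_kernel :: "'a set \<Rightarrow> ('a \<Rightarrow> 'a \<Rightarrow> bool) \<Rightarrow> 'a set \<Rightarrow> real \<Rightarrow> 'a \<Rightarrow> 'a \<Rightarrow> real" where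
  "dirichlet_heat_kernel V E S t = matexp S (- t) (norm_laplacian V E)"

definition solves_boundary :: "'a set \<Rightarrow> ('a \<Rightarrow> 'a \<Rightarrow> bool) \<Rightarrow> ('a \<Rightarrow> real) \<Rightarrow> 'a set \<Rightarrow> ('a \<Rightarrow> real) \<Rightarrow> bool" where
  "solves_boundary V E b S x \<longleftrightarrow>
     (\<forall>v\<in>S. x v = (\<Sum>u\<in>{u\<in>V. E u v}. x u / sqrt (real (degree V E v) * real (degree V E u))))
     \<and> (\<forall>v\<in>V - S. x v = b v)"

definition b_one :: "'a set \<Rightarrow> ('a \<Rightarrow> 'a \<Rightarrow> bool) \<Rightarrow> ('a \<Rightarrow> real) \<Rightarrow> 'a set \<Rightarrow> 'a \<Rightarrow> real" where
  "b_one V E b S u = inverse (sqrt (real (degree V E u))) *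
     (\<Sum>w\<in>vboundary V E S. adj E u w * inverse (sqrt (real (degree V E w))) * b w)"

end

theory Submission
  imports Defs "HOL-Real_Asymp.Real_Asymp"
begin

locale hctx =
  fixes V :: "'a set" and E :: "'a \<Rightarrow> 'a \<Rightarrow> bool" and S :: "'a set"
  assumes sg: "simple_graph V E"
    and SV: "S \<subseteq> V"
    and dpos: "\<And>u. u \<in> S \<Longrightarrow> degree V E u > 0"
    and connS: "connected_on E S"
    and bdry: "\<exists>w0\<in>S. \<exists>w1\<in>V-S. E w0 w1"
begin

abbreviation "d u \<equiv> real (degree V E u)"
abbreviation "M \<equiv> norm_laplacian V E"
definition Q :: "('a \<Rightarrow> real) \<Rightarrow> real" where "Q z = (\<Sum>u\<in>S. \<Sum>w\<in>S. z u * M u w * z w)"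
definition yv :: "('a \<Rightarrow> real) \<Rightarrow> 'a \<Rightarrow> real" where "yv z u = z u / sqrt (d u)"

lemma finV: "finite V" using sg by (simp add: simple_graph_def)
lemma finS: "finite S" using finV SV finite_subset by blast
lemma Esym: "E u w \<Longrightarrow> E w u" using sg by (simp add: simple_graph_def)
lemma adj_sym: "adj E u w = adj E w u" using Esym by (auto simp: adj_def)
lemma adj_nonneg: "0 \<le> adj E u w" by (simp add: adj_def)
lemma deg_sum: "d u = (\<Sum>w\<in>V. adj E u w)"
proof -
  have "d u = (\<Sum>w\<in>{w\<in>V. E u w}. (1::real))" by (simp add: degree_def)
  also have "\<dots> = (\<Sum>w\<in>V. if E u w then 1 else 0)" by (rule sum.inter_filter[OF finV])
  also have "\<dots> = (\<Sum>w\<in>V. adj E u w)" by (simp add: adj_def)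
  finally show ?thesis .
qed

lemma term_eq:
  assumes "u \<in> S" "w \<in> S"
  shows "z u * M u w * z w = yv z u * ((if u = w then d u else 0) - adj E u w) * yv z w"
proof -
  have "d u > 0" "d w > 0" using dpos assms by auto
  then have "sqrt (d u) > 0" "sqrt (d w) > 0" by auto
  then show ?thesis unfolding norm_laplacian_def yv_def
    by (simp add: field_simps)
qed

lemma Q_eq:
  "Q z = (\<Sum>u\<in>S. \<Sum>w\<in>S. adj E u w * (yv z u - yv z w)^2) / 2
        + (\<Sum>u\<in>S. \<Sum>w\<in>V-S. adj E u w * (yv z u)^2)"
proof -
  let ?y = "yv z"
  have "Q z = (\<Sum>u\<in>S. \<Sum>w\<in>S. ?y u * ((if u = w then d u else 0) - adj E u w) * ?y w)"
    unfolding Q_def by (intro sum.cong refl) (simp add: term_eq)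
  also have "\<dots> = (\<Sum>u\<in>S. \<Sum>w\<in>S. (if u = w then d u * ?y u * ?y w else 0))
      - (\<Sum>u\<in>S. \<Sum>w\<in>S. adj E u w * ?y u * ?y w)"
  proof -
    have "?y u * ((if u = w then d u else 0) - adj E u w) * ?y w
        = (if u = w then d u * ?y u * ?y w else 0) - adj E u w * ?y u * ?y w" for u w
      by (simp add: algebra_simps)
    then show ?thesis by (simp add: sum_subtractf)
  qed
  also have "(\<Sum>u\<in>S. \<Sum>w\<in>S. (if u = w then d u * ?y u * ?y w else 0)) = (\<Sum>u\<in>S. d u * ?y u ^2)"
    using finS by (simp add: power2_eq_square mult.assoc)
  also have "\<dots> = (\<Sum>u\<in>S. \<Sum>w\<in>S. adj E u w * ?y u ^2) + (\<Sum>u\<in>S. \<Sum>w\<in>V-S. adj E u w * ?y u^2)"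
  proof -
    have "d u * ?y u ^2 = (\<Sum>w\<in>S. adj E u w * ?y u ^2) + (\<Sum>w\<in>V-S. adj E u w * ?y u^2)" for u
      unfolding deg_sum sum_distrib_right[symmetric]
      using sum.subset_diff[OF SV finV, of "adj E u"] by (simp add: algebra_simps)
    then show ?thesis by (simp add: sum.distrib)
  qed
  finally have 1: "Q z = (\<Sum>u\<in>S. \<Sum>w\<in>S. adj E u w * ?y u ^2) - (\<Sum>u\<in>S. \<Sum>w\<in>S. adj E u w * ?y u * ?y w)
     + (\<Sum>u\<in>S. \<Sum>w\<in>V-S. adj E u w * ?y u^2)" by simp
  have sw: "(\<Sum>u\<in>S. \<Sum>w\<in>S. adj E u w * ?y w ^2) = (\<Sum>u\<in>S. \<Sum>w\<in>S. adj E u w * ?y u ^2)"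
    by (subst sum.swap) (simp add: adj_sym)
  have "(\<Sum>u\<in>S. \<Sum>w\<in>S. adj E u w * (?y u - ?y w)^2)
     = (\<Sum>u\<in>S. \<Sum>w\<in>S. adj E u w * ?y u ^2) - 2 * (\<Sum>u\<in>S. \<Sum>w\<in>S. adj E u w * ?y u * ?y w)
       + (\<Sum>u\<in>S. \<Sum>w\<in>S. adj E u w * ?y w ^2)"
    by (simp add: power2_diff algebra_simps sum.distrib sum_subtractf sum_distrib_left)
  with sw 1 show ?thesis by simp
qed

lemma Q_nonneg: "0 \<le> Q z"
  unfolding Q_eq by (intro add_nonneg_nonneg divide_nonneg_nonneg sum_nonneg mult_nonneg_nonneg adj_nonneg) auto

lemma Q_edge:
  assumes "u \<in> S" "w \<in> S" "E u w"
  shows "(yv z u - yv z w)^2 \<le> 2 * Q z"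
proof -
  let ?f = "\<lambda>u w. adj E u w * (yv z u - yv z w)^2"
  have "?f u w \<le> (\<Sum>w\<in>S. ?f u w)"
    by (rule member_le_sum) (auto simp: assms finS adj_nonneg)
  also have "\<dots> \<le> (\<Sum>u\<in>S. \<Sum>w\<in>S. ?f u w)"
    by (rule member_le_sum[where f="\<lambda>u. \<Sum>w\<in>S. ?f u w"]) (auto simp: assms finS adj_nonneg intro!: sum_nonneg)
  finally have "(yv z u - yv z w)^2 \<le> (\<Sum>u\<in>S. \<Sum>w\<in>S. ?f u w)" using assms by (simp add: adj_def)
  moreover have "0 \<le> (\<Sum>u\<in>S. \<Sum>w\<in>V-S. adj E u w * (yv z u)^2)"
    by (intro sum_nonneg mult_nonneg_nonneg adj_nonneg) auto
  moreover have "2 * Q z = (\<Sum>u\<in>S. \<Sum>w\<in>S. ?f u w) + 2 * (\<Sum>u\<in>S. \<Sum>w\<in>V-S. adj E u w * (yv z u)^2)"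
    unfolding Q_eq by simp
  ultimately show ?thesis by linarith
qed

lemma Q_bd:
  assumes "u \<in> S" "w \<in> V - S" "E u w"
  shows "(yv z u)^2 \<le> Q z"
proof -
  let ?f = "\<lambda>u w. adj E u w * (yv z u)^2"
  have "?f u w \<le> (\<Sum>w\<in>V-S. ?f u w)"
    by (rule member_le_sum) (use assms in \<open>auto simp: finV adj_nonneg\<close>)
  also have "\<dots> \<le> (\<Sum>u\<in>S. \<Sum>w\<in>V-S. ?f u w)"
    by (rule member_le_sum[where f="\<lambda>u. \<Sum>w\<in>V-S. ?f u w"]) (auto simp: assms finS adj_nonneg intro!: sum_nonneg)
  finally have "(yv z u)^2 \<le> (\<Sum>u\<in>S. \<Sum>w\<in>V-S. ?f u w)" using assms by (simp add: adj_def)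
  moreover have "0 \<le> (\<Sum>u\<in>S. \<Sum>w\<in>S. adj E u w * (yv z u - yv z w)^2)"
    by (intro sum_nonneg mult_nonneg_nonneg adj_nonneg) auto
  ultimately show ?thesis unfolding Q_eq by linarith
qed

lemma reach:
  assumes "w0 \<in> S" "w1 \<in> V - S" "E w0 w1"
    and "(\<lambda>x y. x \<in> S \<and> y \<in> S \<and> E x y)\<^sup>*\<^sup>* w0 u"
  shows "\<exists>c. \<forall>z. (yv z u)^2 \<le> c * Q z"
  using assms(4)
proof (induction rule: rtranclp_induct)
  case base
  then show ?case using Q_bd[OF assms(1-3)] by (intro exI[of _ 1]) auto
next
  case (step a b)
  then obtain c where c: "\<And>z. (yv z a)^2 \<le> c * Q z" by blast
  have "(yv z b)^2 \<le> (2*c+4) * Q z" for z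
  proof -
    have e: "2*(yv z a)^2 + 2*(yv z a - yv z b)^2 - (yv z b)^2 = (2*yv z a - yv z b)^2"
      by (simp add: power2_eq_square algebra_simps)
    have "0 \<le> (2*yv z a - yv z b)^2" by simp
    moreover have "(yv z a - yv z b)^2 \<le> 2 * Q z" using Q_edge step by auto
    moreover note c[of z]
    moreover have "(2*c+4) * Q z = 2*(c * Q z) + 4 * Q z" by (simp add: algebra_simps)
    ultimately show ?thesis using e by linarith
  qed
  then show ?case by blast
qed

lemma Q_coercive: "\<exists>lam>0. \<forall>z. lam * (\<Sum>u\<in>S. (z u)^2) \<le> Q z"
proof -
  obtain w0 w1 where w: "w0 \<in> S" "w1 \<in> V - S" "E w0 w1" using bdry by blast
  have "\<forall>u\<in>S. \<exists>c. \<forall>z. (yv z u)^2 \<le> c * Q z"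
    using reach[OF w] connS w(1) unfolding connected_on_def by blast
  then obtain c where c: "\<And>u z. u \<in> S \<Longrightarrow> (yv z u)^2 \<le> c u * Q z" by metis
  define C where "C = (\<Sum>u\<in>S. d u * \<bar>c u\<bar>)"
  have C0: "0 \<le> C" unfolding C_def by (intro sum_nonneg) auto
  have "(\<Sum>u\<in>S. (z u)^2) \<le> (C + 1) * Q z" for z
  proof -
    have "(\<Sum>u\<in>S. (z u)^2) = (\<Sum>u\<in>S. d u * (yv z u)^2)"
    proof (intro sum.cong refl)
      fix u assume "u \<in> S"
      then have "d u > 0" using dpos by auto
      then show "(z u)^2 = d u * (yv z u)^2" by (simp add: yv_def power_divide)
    qed
    also have "\<dots> \<le> (\<Sum>u\<in>S. d u * (\<bar>c u\<bar> * Q z))"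
    proof (intro sum_mono mult_left_mono)
      fix u assume "u \<in> S"
      have "c u * Q z \<le> \<bar>c u\<bar> * Q z" using Q_nonneg by (intro mult_right_mono) auto
      then show "(yv z u)^2 \<le> \<bar>c u\<bar> * Q z" using c[OF \<open>u \<in> S\<close>, of z] by linarith
    qed auto
    also have "\<dots> = C * Q z" unfolding C_def by (simp add: sum_distrib_right mult.assoc)
    also have "\<dots> \<le> (C + 1) * Q z" using Q_nonneg[of z] by (simp add: algebra_simps)
    finally show ?thesis .
  qed
  then have "\<forall>z. 1/(C+1) * (\<Sum>u\<in>S. (z u)^2) \<le> Q z" using C0 by (simp add: field_simps)
  moreover have "1/(C+1) > 0" using C0 by simp
  ultimately show ?thesis by blast
qed

definition EE :: "real \<Rightarrow> 'a \<Rightarrow> 'a \<Rightarrow> real" where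
  "EE s u w = (\<Sum>n. matpow S M n u w / fact n * s^n)"
definition K :: real where "K = 1 + (\<Sum>u\<in>S. \<Sum>w\<in>S. \<bar>M u w\<bar>)"

lemma K_row: "u \<in> S \<Longrightarrow> (\<Sum>x\<in>S. \<bar>M u x\<bar>) \<le> K"
proof -
  assume u: "u \<in> S"
  have "(\<Sum>x\<in>S. \<bar>M u x\<bar>) \<le> (\<Sum>u\<in>S. \<Sum>w\<in>S. \<bar>M u w\<bar>)"
    by (rule member_le_sum[where f="\<lambda>u. \<Sum>w\<in>S. \<bar>M u w\<bar>"]) (auto simp: u finS intro!: sum_nonneg)
  then show ?thesis unfolding K_def by simp
qed

lemma K_nonneg: "0 \<le> K" unfolding K_def by (intro add_nonneg_nonneg sum_nonneg) auto

lemma P_bound: "u \<in> S \<Longrightarrow> w \<in> S \<Longrightarrow> \<bar>matpow S M n u w\<bar> \<le> K ^ n"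
proof (induction n arbitrary: u w)
  case 0
  then show ?case using K_nonneg by simp
next
  case (Suc n)
  have "\<bar>matpow S M (Suc n) u w\<bar> = \<bar>\<Sum>x\<in>S. M u x * matpow S M n x w\<bar>" by (simp add: matmul_def)
  also have "\<dots> \<le> (\<Sum>x\<in>S. \<bar>M u x\<bar> * K^n)"
    by (rule order_trans[OF sum_abs sum_mono]) (auto simp: abs_mult Suc intro!: mult_left_mono)
  also have "\<dots> = (\<Sum>x\<in>S. \<bar>M u x\<bar>) * K^n" by (simp add: sum_distrib_right)
  also have "\<dots> \<le> K * K^n" using K_row[OF Suc(2)] K_nonneg by (intro mult_right_mono) auto
  finally show ?case by simp
qed

lemma P_summable:
  assumes "u \<in> S" "w \<in> S"
  shows "summable (\<lambda>n. matpow S M n u w / fact n * s^n)"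
proof (rule summable_comparison_test'[OF summable_exp[of "K * \<bar>s\<bar>"]])
  fix n :: nat
  have "norm (matpow S M n u w / fact n * s^n) = \<bar>matpow S M n u w\<bar> * \<bar>s\<bar>^n / fact n"
    by (simp add: abs_mult power_abs)
  also have "\<dots> \<le> K^n * \<bar>s\<bar>^n / fact n"
    by (intro divide_right_mono mult_right_mono P_bound assms) auto
  also have "\<dots> = inverse (fact n) * (K * \<bar>s\<bar>)^n" by (simp add: power_mult_distrib field_simps)
  finally show "norm (matpow S M n u w / fact n * s^n) \<le> inverse (fact n) * (K * \<bar>s\<bar>)^n" .
qed

lemma EE_deriv:
  assumes "u \<in> S" "w \<in> S"
  shows "((\<lambda>s. EE s u w) has_field_derivative (\<Sum>n. matpow S M (Suc n) u w / fact n * s^n)) (at s)"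
proof -
  have "((\<lambda>s. \<Sum>n. (\<lambda>n. matpow S M n u w / fact n) n * s^n) has_field_derivative
        (\<Sum>n. diffs (\<lambda>n. matpow S M n u w / fact n) n * s^n)) (at s)"
    by (rule termdiffs_strong_converges_everywhere) (use P_summable[OF assms] in simp)
  moreover have "diffs (\<lambda>n. matpow S M n u w / fact n) = (\<lambda>n. matpow S M (Suc n) u w / fact n)"
    by (rule ext) (simp add: diffs_def del: matpow.simps)
  ultimately show ?thesis unfolding EE_def by simp
qed

lemma P_comm: "u \<in> S \<Longrightarrow> w \<in> S \<Longrightarrow> matpow S M (Suc n) u w = (\<Sum>x\<in>S. matpow S M n u x * M x w)"
proof (induction n arbitrary: u w)
  case 0
  have "matpow S M (Suc 0) u w = (\<Sum>x\<in>S. M u x * (if x = w then 1 else 0))"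
    by (simp only: matpow.simps matmul_def)
  also have "\<dots> = (\<Sum>x\<in>S. if x = w then M u x else 0)"
    by (intro sum.cong) auto
  also have "\<dots> = M u w" using 0 finS by simp
  also have "\<dots> = (\<Sum>x\<in>S. if u = x then M x w else 0)" using 0 finS by simp
  also have "\<dots> = (\<Sum>x\<in>S. matpow S M 0 u x * M x w)"
    by (intro sum.cong) auto
  finally show ?case .
next
  case (Suc n)
  have "matpow S M (Suc (Suc n)) u w = (\<Sum>x\<in>S. M u x * matpow S M (Suc n) x w)"
    by (simp only: matpow.simps matmul_def)
  also have "\<dots> = (\<Sum>x\<in>S. M u x * (\<Sum>y\<in>S. matpow S M n x y * M y w))"
  proof (intro sum.cong refl)
    fix x assume "x \<in> S"
    show "M u x * matpow S M (Suc n) x w = M u x * (\<Sum>y\<in>S. matpow S M n x y * M y w)"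
      using Suc.IH[OF \<open>x \<in> S\<close> Suc.prems(2)] by (simp only:)
  qed
  also have "\<dots> = (\<Sum>x\<in>S. \<Sum>y\<in>S. M u x * matpow S M n x y * M y w)"
    by (simp only: sum_distrib_left mult.assoc)
  also have "\<dots> = (\<Sum>y\<in>S. \<Sum>x\<in>S. M u x * matpow S M n x y * M y w)"
    by (rule sum.swap)
  also have "\<dots> = (\<Sum>y\<in>S. (\<Sum>x\<in>S. M u x * matpow S M n x y) * M y w)"
    by (simp only: sum_distrib_right)
  also have "\<dots> = (\<Sum>y\<in>S. matpow S M (Suc n) u y * M y w)"
    by (simp only: matpow.simps matmul_def)
  finally show ?case .
qed

lemma deriv_left:
  assumes "w \<in> S"
  shows "(\<Sum>n. matpow S M (Suc n) u w / fact n * s^n) = (\<Sum>x\<in>S. M u x * EE s x w)"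
proof -
  have "(\<lambda>n. \<Sum>x\<in>S. M u x * (matpow S M n x w / fact n * s^n)) sums (\<Sum>x\<in>S. M u x * EE s x w)"
    unfolding EE_def
    by (intro sums_sum sums_mult summable_sums P_summable assms)
  moreover have "(\<lambda>n. \<Sum>x\<in>S. M u x * (matpow S M n x w / fact n * s^n))
      = (\<lambda>n. matpow S M (Suc n) u w / fact n * s^n)"
  proof (rule ext)
    fix n
    have "(\<Sum>x\<in>S. M u x * (matpow S M n x w / fact n * s^n)) = (\<Sum>x\<in>S. M u x * matpow S M n x w * (s^n / fact n))"
      by (intro sum.cong refl) simp
    also have "\<dots> = (\<Sum>x\<in>S. M u x * matpow S M n x w) * (s^n / fact n)"
      by (simp only: sum_distrib_right)
    also have "\<dots> = matpow S M (Suc n) u w / fact n * s^n"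
      by (simp only: matpow.simps matmul_def) simp
    finally show "(\<Sum>x\<in>S. M u x * (matpow S M n x w / fact n * s^n)) = matpow S M (Suc n) u w / fact n * s^n" .
  qed
  ultimately show ?thesis by (simp add: sums_iff)
qed

lemma deriv_right:
  assumes "u \<in> S" "w \<in> S"
  shows "(\<Sum>n. matpow S M (Suc n) u w / fact n * s^n) = (\<Sum>x\<in>S. EE s u x * M x w)"
proof -
  have "(\<lambda>n. \<Sum>x\<in>S. (matpow S M n u x / fact n * s^n) * M x w) sums (\<Sum>x\<in>S. EE s u x * M x w)"
    unfolding EE_def
    by (intro sums_sum sums_mult2 summable_sums P_summable assms)
  moreover have "(\<lambda>n. \<Sum>x\<in>S. (matpow S M n u x / fact n * s^n) * M x w)
      = (\<lambda>n. matpow S M (Suc n) u w / fact n * s^n)"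
  proof (rule ext)
    fix n
    have "(\<Sum>x\<in>S. (matpow S M n u x / fact n * s^n) * M x w) = (\<Sum>x\<in>S. matpow S M n u x * M x w * (s^n / fact n))"
      by (intro sum.cong refl) simp
    also have "\<dots> = (\<Sum>x\<in>S. matpow S M n u x * M x w) * (s^n / fact n)"
      by (simp only: sum_distrib_right)
    also have "\<dots> = matpow S M (Suc n) u w / fact n * s^n"
      by (simp only: P_comm[OF assms]) simp
    finally show "(\<Sum>x\<in>S. (matpow S M n u x / fact n * s^n) * M x w) = matpow S M (Suc n) u w / fact n * s^n" .
  qed
  ultimately have "(\<lambda>n. matpow S M (Suc n) u w / fact n * s^n) sums (\<Sum>x\<in>S. EE s u x * M x w)"
    by (simp only:)
  then show ?thesis by (rule sums_unique[symmetric])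
qed

lemma EE_0: "EE 0 u w = (if u = w then 1 else 0)"
proof -
  have "EE 0 u w = matpow S M 0 u w / fact 0"
    unfolding EE_def by (rule powser_zero)
  then show ?thesis by (simp only: matpow.simps) simp
qed

lemma EEm_deriv_gen:
  assumes "u \<in> S" "w \<in> S"
  shows "((\<lambda>t. EE (-t) u w) has_field_derivative
           (\<Sum>n. matpow S M (Suc n) u w / fact n * (-t)^n) * (-1)) (at t)"
  using DERIV_chain2[where f="\<lambda>s. EE s u w" and g="\<lambda>t. -t" and x=t and s=UNIV and Db="-1", OF EE_deriv[OF assms, of "-t"]]
    DERIV_minus[OF DERIV_ident, of t UNIV] by simp

lemma EEm_deriv_left:
  assumes "u \<in> S" "w \<in> S"
  shows "((\<lambda>t. EE (-t) u w) has_field_derivative - (\<Sum>x\<in>S. M u x * EE (-t) x w)) (at t)"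
  using EEm_deriv_gen[OF assms, of t] deriv_left[OF assms(2), of u "-t"] by simp

lemma EEm_deriv_right:
  assumes "u \<in> S" "w \<in> S"
  shows "((\<lambda>t. EE (-t) u w) has_field_derivative - (\<Sum>x\<in>S. EE (-t) u x * M x w)) (at t)"
  using EEm_deriv_gen[OF assms, of t] deriv_right[OF assms, of "-t"] by simp

definition zt :: "('a \<Rightarrow> real) \<Rightarrow> real \<Rightarrow> 'a \<Rightarrow> real" where
  "zt y t u = (\<Sum>w\<in>S. EE (-t) u w * y w)"

lemma zt_0: "u \<in> S \<Longrightarrow> zt y 0 u = y u"
proof -
  assume u: "u \<in> S"
  have "zt y 0 u = (\<Sum>w\<in>S. if u = w then y w else 0)"
    unfolding zt_def by (intro sum.cong) (auto simp: EE_0)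
  then show ?thesis using u finS by simp
qed

lemma zt_deriv:
  assumes "u \<in> S"
  shows "((\<lambda>t. zt y t u) has_field_derivative - (\<Sum>x\<in>S. M u x * zt y t x)) (at t)"
proof -
  have "((\<lambda>t. zt y t u) has_field_derivative (\<Sum>w\<in>S. (- (\<Sum>x\<in>S. M u x * EE (-t) x w)) * y w)) (at t)"
    unfolding zt_def
    by (intro DERIV_sum DERIV_cmult_right EEm_deriv_left assms)
  moreover have "(\<Sum>w\<in>S. (- (\<Sum>x\<in>S. M u x * EE (-t) x w)) * y w) = - (\<Sum>x\<in>S. M u x * zt y t x)"
  proof -
    have "(\<Sum>w\<in>S. (- (\<Sum>x\<in>S. M u x * EE (-t) x w)) * y w) = - (\<Sum>w\<in>S. \<Sum>x\<in>S. M u x * EE (-t) x w * y w)"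
      by (simp add: sum_distrib_right sum_negf)
    also have "\<dots> = - (\<Sum>x\<in>S. \<Sum>w\<in>S. M u x * EE (-t) x w * y w)"
      by (subst sum.swap) (rule refl)
    also have "\<dots> = - (\<Sum>x\<in>S. M u x * zt y t x)"
      unfolding zt_def by (simp add: sum_distrib_left mult.assoc)
    finally show ?thesis .
  qed
  ultimately show ?thesis by simp
qed

definition gt :: "('a \<Rightarrow> real) \<Rightarrow> real \<Rightarrow> real" where
  "gt y t = (\<Sum>u\<in>S. (zt y t u)^2)"

lemma gt_deriv: "((\<lambda>t. gt y t) has_field_derivative - 2 * Q (zt y t)) (at t)"
proof -
  have "((\<lambda>t. gt y t) has_field_derivative
      (\<Sum>u\<in>S. (- (\<Sum>x\<in>S. M u x * zt y t x)) * zt y t u + (- (\<Sum>x\<in>S. M u x * zt y t x)) * zt y t u)) (at t)"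
    unfolding gt_def power2_eq_square
    by (intro DERIV_sum DERIV_mult zt_deriv)
  moreover have "(\<Sum>u\<in>S. (- (\<Sum>x\<in>S. M u x * zt y t x)) * zt y t u + (- (\<Sum>x\<in>S. M u x * zt y t x)) * zt y t u)
     = - 2 * Q (zt y t)"
    unfolding Q_def by (simp add: sum_distrib_left sum_distrib_right sum.distrib sum_negf algebra_simps)
  ultimately show ?thesis by simp
qed

definition lam :: real where "lam = (SOME lam. lam > 0 \<and> (\<forall>z. lam * (\<Sum>u\<in>S. (z u)^2) \<le> Q z))"

lemma lam: "lam > 0" "lam * (\<Sum>u\<in>S. (z u)^2) \<le> Q z"
  using someI_ex[OF Q_coercive] unfolding lam_def by auto

lemma gt_decay:
  assumes "0 \<le> t"
  shows "gt y t \<le> exp (- 2 * lam * t) * gt y 0"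
proof -
  let ?h = "\<lambda>t. exp (2 * lam * t) * gt y t"
  have "?h t \<le> ?h 0"
  proof (rule DERIV_nonpos_imp_nonincreasing[OF assms])
    fix s :: real
    have "(?h has_field_derivative exp (2 * lam * s) * (2 * lam) * gt y s + (- 2 * Q (zt y s)) * exp (2 * lam * s)) (at s)"
      by (intro DERIV_mult gt_deriv) (auto intro!: derivative_eq_intros)
    moreover have "exp (2 * lam * s) * (2 * lam) * gt y s + (- 2 * Q (zt y s)) * exp (2 * lam * s) \<le> 0"
    proof -
      have "lam * gt y s \<le> Q (zt y s)" unfolding gt_def by (rule lam)
      then have "exp (2 * lam * s) * (lam * gt y s) \<le> exp (2 * lam * s) * Q (zt y s)"
        by (intro mult_left_mono) auto
      then show ?thesis by (simp add: algebra_simps)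
    qed
    ultimately show "\<exists>y. (?h has_field_derivative y) (at s) \<and> y \<le> 0" by blast
  qed
  then have "exp (2 * lam * t) * gt y t \<le> gt y 0" by simp
  then have "gt y t \<le> gt y 0 / exp (2 * lam * t)" by (simp add: field_simps)
  then show ?thesis by (simp add: exp_minus field_simps)
qed

lemma zt_decay:
  assumes "u \<in> S" "0 \<le> t"
  shows "\<bar>zt y t u\<bar> \<le> sqrt (\<Sum>u\<in>S. (y u)^2) * exp (- lam * t)"
proof -
  have g0: "gt y 0 = (\<Sum>u\<in>S. (y u)^2)" unfolding gt_def by (simp add: zt_0)
  have "(zt y t u)^2 \<le> gt y t" unfolding gt_def
    by (rule member_le_sum[where f="\<lambda>u. (zt y t u)^2"]) (auto simp: assms finS)
  also have "\<dots> \<le> exp (- 2 * lam * t) * gt y 0" by (rule gt_decay[OF assms(2)])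
  also have "\<dots> = (sqrt (\<Sum>u\<in>S. (y u)^2) * exp (- lam * t))^2"
    by (simp add: g0 power_mult_distrib sum_nonneg exp_double[symmetric] power2_eq_square[of "exp _"] exp_add[symmetric])
  finally have "(zt y t u)^2 \<le> (sqrt (\<Sum>u\<in>S. (y u)^2) * exp (- lam * t))^2" .
  then have "\<bar>zt y t u\<bar> \<le> \<bar>sqrt (\<Sum>u\<in>S. (y u)^2) * exp (- lam * t)\<bar>" by (simp only: abs_le_square_iff)
  moreover have "0 \<le> sqrt (\<Sum>u\<in>S. (y u)^2) * exp (- lam * t)"
    by (intro mult_nonneg_nonneg real_sqrt_ge_zero sum_nonneg) auto
  ultimately show ?thesis by simp
qed

lemma exp_decay_lim: "((\<lambda>y. exp (- lam * y)) \<longlongrightarrow> 0) at_top"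
proof -
  have "LIM y at_top. lam * y :> at_top"
    by (rule filterlim_tendsto_pos_mult_at_top[OF tendsto_const lam(1) filterlim_ident])
  then have "LIM y at_top. - (lam * y) :> at_bot" by (simp only: filterlim_uminus_at_top)
  then have "LIM y at_top. - lam * y :> at_bot" by simp
  then show ?thesis by (rule filterlim_compose[OF exp_at_bot])
qed

lemma main_int:
  assumes v: "v \<in> S" and b1: "\<And>u. u \<in> S \<Longrightarrow> b1 u = (\<Sum>w\<in>S. M u w * x w)"
  shows "((\<lambda>t. \<Sum>u\<in>S. EE (-t) v u * b1 u) has_integral x v) {0..}"
proof -
  define f where "f t = (\<Sum>u\<in>S. EE (-t) v u * b1 u)" for t
  define F where "F t = zt x t v" for t
  define C where "C = sqrt (\<Sum>u\<in>S. (b1 u)^2)"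
  define C' where "C' = sqrt (\<Sum>u\<in>S. (x u)^2)"
  have C0: "0 \<le> C" unfolding C_def by (intro real_sqrt_ge_zero sum_nonneg) auto
  have fz: "f t = zt b1 t v" for t unfolding f_def zt_def by simp
  have fb: "\<bar>f t\<bar> \<le> C * exp (- lam * t)" if "0 \<le> t" for t
    unfolding fz C_def by (rule zt_decay[OF v that])
  have Fb: "\<bar>F t\<bar> \<le> C' * exp (- lam * t)" if "0 \<le> t" for t
    unfolding F_def C'_def by (rule zt_decay[OF v that])
  have F0: "F 0 = x v" unfolding F_def by (rule zt_0[OF v])
  have Fd: "(F has_field_derivative - f t) (at t)" for t
  proof -
    have "(F has_field_derivative (\<Sum>w\<in>S. (- (\<Sum>u\<in>S. EE (-t) v u * M u w)) * x w)) (at t)"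
      unfolding F_def zt_def
      by (intro DERIV_sum DERIV_cmult_right EEm_deriv_right v)
    moreover have "(\<Sum>w\<in>S. (- (\<Sum>u\<in>S. EE (-t) v u * M u w)) * x w) = - f t"
    proof -
      have "(\<Sum>w\<in>S. (- (\<Sum>u\<in>S. EE (-t) v u * M u w)) * x w) = - (\<Sum>w\<in>S. \<Sum>u\<in>S. EE (-t) v u * M u w * x w)"
        by (simp add: sum_distrib_right sum_negf)
      also have "\<dots> = - (\<Sum>u\<in>S. \<Sum>w\<in>S. EE (-t) v u * M u w * x w)"
        by (subst sum.swap) (rule refl)
      also have "\<dots> = - f t"
        unfolding f_def using b1 by (simp add: sum_distrib_left mult.assoc)
      finally show ?thesis .
    qed
    ultimately show ?thesis by simp
  qed
  define G where "G t = - F t - C * exp (- lam * t) / lam" for t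
  define h1 where "h1 t = f t + C * exp (- lam * t)" for t
  have Gd: "(G has_field_derivative h1 t) (at t)" for t
  proof -
    have "(G has_field_derivative (- (- f t) - C * (exp (- lam * t) * (- lam)) / lam)) (at t)"
      unfolding G_def
      by (intro DERIV_diff DERIV_minus Fd DERIV_cdivide DERIV_cmult) (auto intro!: derivative_eq_intros)
    then show ?thesis using lam(1) unfolding h1_def by (simp add: field_simps)
  qed
  have h1int: "(h1 has_integral (G y - G 0)) {0..y}" if "0 \<le> y" for y
    by (rule fundamental_theorem_of_calculus[OF that])
       (auto simp: has_real_derivative_iff_has_vector_derivative[symmetric] intro!: has_field_derivative_at_within Gd)
  have h1i: "h1 integrable_on {0..y}" for y
  proof (cases "0 \<le> y")
    case True then show ?thesis using h1int by blast
  next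
    case False then show ?thesis by (simp add: integrable_on_empty)
  qed
  have Flim: "(F \<longlongrightarrow> 0) at_top"
  proof (rule Lim_null_comparison)
    show "\<forall>\<^sub>F t in at_top. norm (F t) \<le> C' * exp (- lam * t)"
      using Fb by (auto intro!: eventually_mono[OF eventually_ge_at_top[of 0]])
    show "((\<lambda>t. C' * exp (- lam * t)) \<longlongrightarrow> 0) at_top"
      using tendsto_mult_right_zero[OF exp_decay_lim] by simp
  qed
  have Glim: "(G \<longlongrightarrow> 0) at_top"
    unfolding G_def using tendsto_minus[OF Flim] tendsto_mult_right_zero[OF exp_decay_lim, of C]
    by (auto intro!: tendsto_diff[where b=0, simplified] tendsto_divide_zero)
  have lim1: "((\<lambda>y. integral {0..y} h1) \<longlongrightarrow> x v + C / lam) at_top"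
  proof -
    have ev: "\<forall>\<^sub>F y in at_top. G y - G 0 = integral {0..y} h1"
    proof (rule eventually_mono[OF eventually_ge_at_top[of 0]])
      fix y :: real assume "0 \<le> y"
      then show "G y - G 0 = integral {0..y} h1" using h1int by (metis integral_unique)
    qed
    have "((\<lambda>y. G y - G 0) \<longlongrightarrow> 0 - G 0) at_top"
      by (intro tendsto_diff Glim tendsto_const)
    moreover have "0 - G 0 = x v + C / lam" unfolding G_def F0 by simp
    ultimately have "((\<lambda>y. G y - G 0) \<longlongrightarrow> x v + C / lam) at_top" by simp
    then show ?thesis using ev by (rule Lim_transform_eventually)
  qed
  have h1nn: "0 \<le> h1 t" if "0 \<le> t" for t
    using fb[OF that] unfolding h1_def by linarith
  have I1: "(h1 has_integral (x v + C / lam)) {0..}"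
    by (rule has_integral_to_inf[OF h1i lim1 h1nn])
  have I2: "((\<lambda>t. C * exp (- lam * t)) has_integral (C * (exp (- lam * 0) / lam))) {0..}"
    by (rule has_integral_mult_right[OF has_integral_exp_minus_to_infinity[OF lam(1)]])
  have "((\<lambda>t. h1 t - C * exp (- lam * t)) has_integral (x v + C / lam - C * (exp (- lam * 0) / lam))) {0..}"
    by (rule has_integral_diff[OF I1 I2])
  moreover have "(\<lambda>t. h1 t - C * exp (- lam * t)) = f" unfolding h1_def by auto
  ultimately show ?thesis unfolding f_def by simp
qed

lemma b1_eq:
  assumes sol: "solves_boundary V E b S x" and u: "u \<in> S"
  shows "b_one V E b S u = (\<Sum>w\<in>S. M u w * x w)"
proof -
  have du: "d u > 0" using dpos u by auto
  define c where "c w = inverse (sqrt (d u)) * inverse (sqrt (d w))" for w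
  have "x u = (\<Sum>w\<in>{w\<in>V. E w u}. x w / sqrt (d u * d w))"
    using sol u unfolding solves_boundary_def by blast
  also have "\<dots> = (\<Sum>w\<in>V. if E w u then x w / sqrt (d u * d w) else 0)"
    by (rule sum.inter_filter[OF finV])
  also have "\<dots> = (\<Sum>w\<in>V. adj E u w * c w * x w)"
  proof (intro sum.cong refl)
    fix w
    have "E w u \<longleftrightarrow> E u w" using Esym by blast
    then show "(if E w u then x w / sqrt (d u * d w) else 0) = adj E u w * c w * x w"
      unfolding adj_def c_def by (simp add: real_sqrt_mult divide_inverse inverse_mult_distrib mult_ac)
  qed
  also have "\<dots> = (\<Sum>w\<in>V-S. adj E u w * c w * x w) + (\<Sum>w\<in>S. adj E u w * c w * x w)"
    by (rule sum.subset_diff[OF SV finV])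
  finally have xu: "x u = (\<Sum>w\<in>V-S. adj E u w * c w * x w) + (\<Sum>w\<in>S. adj E u w * c w * x w)" .
  have "(\<Sum>w\<in>V-S. adj E u w * c w * x w) = (\<Sum>w\<in>V-S. adj E u w * c w * b w)"
    using sol unfolding solves_boundary_def by (intro sum.cong refl) auto
  also have "\<dots> = (\<Sum>w\<in>vboundary V E S. adj E u w * c w * b w)"
  proof (rule sum.mono_neutral_right)
    show "finite (V - S)" using finV by simp
    show "vboundary V E S \<subseteq> V - S" unfolding vboundary_def by auto
    show "\<forall>w\<in>V - S - vboundary V E S. adj E u w * c w * b w = 0"
      using u Esym unfolding vboundary_def adj_def by auto
  qed
  also have "\<dots> = b_one V E b S u"
    unfolding b_one_def c_def by (simp add: sum_distrib_left mult_ac)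
  finally have bo: "b_one V E b S u = (\<Sum>w\<in>V-S. adj E u w * c w * x w)" by simp
  have Muw: "M u w = (if u = w then 1 else 0) - adj E u w * c w" for w
  proof (cases "u = w")
    case True
    have "sqrt (d u) > 0" using du by simp
    then show ?thesis using True du unfolding norm_laplacian_def c_def
      by (simp add: field_simps)
  next
    case False
    then show ?thesis unfolding norm_laplacian_def c_def by simp
  qed
  have "(\<Sum>w\<in>S. M u w * x w) = (\<Sum>w\<in>S. (if u = w then x w else 0) - adj E u w * c w * x w)"
    by (intro sum.cong refl) (simp add: Muw algebra_simps)
  also have "\<dots> = x u - (\<Sum>w\<in>S. adj E u w * c w * x w)"
    using u finS by (simp add: sum_subtractf)
  finally show ?thesis using xu bo by simp
qed

end

theorem corollary1:
  fixes V :: "'a set" and E :: "'a \<Rightarrow> 'a \<Rightarrow> bool" and b :: "'a \<Rightarrow> real"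
    and S :: "'a set" and x :: "'a \<Rightarrow> real"
  assumes "simple_graph V E"
    and "connected_on E V"
    and "\<exists>v\<in>V. b v \<noteq> 0"
    and "S \<subset> V"
    and "boundable V E b S"
    and "solves_boundary V E b S x"
  shows "\<forall>v\<in>S. ((\<lambda>t. \<Sum>u\<in>S. dirichlet_heat_kernel V E S t v u * b_one V E b S u)
                   has_integral x v) {0..}"
proof -
  have SV: "S \<subseteq> V" using assms(4) by auto
  have finV: "finite V" using assms(1) by (simp add: simple_graph_def)
  have Esym: "\<And>u w. E u w \<Longrightarrow> E w u" using assms(1) by (simp add: simple_graph_def)
  have connS: "connected_on E S" using assms(5) by (simp add: boundable_def)
  have bdry: "\<exists>w0\<in>S. \<exists>w1\<in>V-S. E w0 w1"
  proof -
    obtain w1 where "w1 \<in> vboundary V E S" using assms(5) unfolding boundable_def by blast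
    then obtain w0 where "w0 \<in> S" "w1 \<in> V - S" "E w1 w0" unfolding vboundary_def by blast
    then show ?thesis using Esym by blast
  qed
  have dpos: "degree V E u > 0" if u: "u \<in> S" for u
  proof -
    obtain w where w: "w \<in> V" "w \<notin> S" using assms(4) by blast
    have "(\<lambda>x y. x \<in> V \<and> y \<in> V \<and> E x y)\<^sup>*\<^sup>* u w"
      using assms(2) u SV w unfolding connected_on_def by blast
    then obtain y where "y \<in> V" "E u y"
      by (cases rule: converse_rtranclpE) (use u w in auto)
    then have "{y\<in>V. E u y} \<noteq> {}" by blast
    then show ?thesis unfolding degree_def using finV by (simp add: card_gt_0_iff)
  qed
  interpret hctx V E S
    by unfold_locales (use assms(1) SV dpos connS bdry in auto)
  show ?thesis
  proof
    fix v assume v: "v \<in> S"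
    have hk: "dirichlet_heat_kernel V E S t v u = EE (-t) v u" for t u
      unfolding dirichlet_heat_kernel_def matexp_def EE_def
      by (rule arg_cong[where f=suminf]) (simp add: fun_eq_iff)
    have "((\<lambda>t. \<Sum>u\<in>S. EE (-t) v u * b_one V E b S u) has_integral x v) {0..}"
      by (rule main_int[OF v b1_eq[OF assms(6)]])
    then show "((\<lambda>t. \<Sum>u\<in>S. dirichlet_heat_kernel V E S t v u * b_one V E b S u) has_integral x v) {0..}"
      by (simp add: hk)
  qed
qed

end
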